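(* Let $G$ be a transitively closed directed acyclic graph on $[n]$ and let $H\subseteq G$ be path consistent and admissible with respect to $G$. Then there exist a partition $\mathcal P$ of $[n]$ and, for each $P\in\mathcal P$, disjoint subsets $L_P,R_P\subseteq P$ such that $E(H)=\bigcup_{P\in\mathcal P}E\big((G|_P)_{L_P,R_P}\big)$.
   Context: Conventions: $G$ is a directed acyclic graph with vertex set $[n]$, every edge $(i,j)\in E(G)$ satisfying $i<j$. A subgraph $H\subseteq G$ means $V(H)=[n]$ and $E(H)\subseteq E(G)$; $H^{un}$ is the underlying undirected graph. $G$ is transitively closed if $(i,j),(j,k)\in E(G)$ implies $(i,k)\in E(G)$. $G|_P$ is the induced subgraph on $P$. For disjoint $L,R$, $G_{L,R}$ is the subgraph with edges $\{(i,j)\in E(G):i\in L,j\in R\}$. Path consistency: for an undirected path $p$ in $H^{un}$ from $u$ to $v$, let $\delta(p)$ be the number of edges traversed (from $u$ to $v$) along their orientation minus the number traversed against it. $H$ is path consistent if any two undirected paths in $H^{un}$ with the same endpoints $u,v$ have equal $\delta$; this common value is $\ell_{uv}$. Within a connected component $C$ of $H^{un}$, a weight source is $u_*\in C$ with $\ell_{u_*v_*}=\max_{u,v\in C}\ell_{uv}$ for some $v_*\in C$. The weight function is $w(i)=\ell_{u_*i}$, $u_*$ any weight source in the component of $i$. $H_{comp}$: directed multigraph whose vertices are the connected components of $H^{un}$, with one edge from the component of $u$ to that of $v$ for each $(u,v)\in E(G)\setminus E(H)$; for such an edge $e$, $\mathsf{wd}(e)=w(u)-w(v)$. $H$ is admissible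 with respect to $G$ if for every directed cycle $\mathcal C$ of $H_{comp}$ (including loops), $\sum_{e\in\mathcal C}\mathsf{wd}(e)>-|\mathcal C|$. *)

theory Defs
  imports Main "HOL-Library.Disjoint_Sets"
begin

definition dag_on :: "nat \<Rightarrow> (nat \<times> nat) set \<Rightarrow> bool" where
  "dag_on n E \<longleftrightarrow> E \<subseteq> {(i,j). 1 \<le> i \<and> i < j \<and> j \<le> n}"

definition trans_closed :: "(nat \<times> nat) set \<Rightarrow> bool" where
  "trans_closed E \<longleftrightarrow> (\<forall>i j k. (i,j) \<in> E \<and> (j,k) \<in> E \<longrightarrow> (i,k) \<in> E)"

definition upath :: "nat \<Rightarrow> (nat \<times> nat) set \<Rightarrow> nat \<Rightarrow> nat \<Rightarrow> nat list \<Rightarrow> bool" where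
  "upath n EH u v p \<longleftrightarrow> p \<noteq> [] \<and> hd p = u \<and> last p = v \<and> distinct p \<and>
     set p \<subseteq> {1..n} \<and>
     (\<forall>i. Suc i < length p \<longrightarrow> (p!i, p!Suc i) \<in> EH \<or> (p!Suc i, p!i) \<in> EH)"

definition delta :: "(nat \<times> nat) set \<Rightarrow> nat list \<Rightarrow> int" where
  "delta EH p = (\<Sum>i<length p - 1. if (p!i, p!Suc i) \<in> EH then 1 else -1)"

definition path_consistent :: "nat \<Rightarrow> (nat \<times> nat) set \<Rightarrow> bool" where
  "path_consistent n EH \<longleftrightarrow>
     (\<forall>u v p q. upath n EH u v p \<and> upath n EH u v q \<longrightarrow> delta EH p = delta EH q)"

definition ell :: "nat \<Rightarrow> (nat \<times> nat) set \<Rightarrow> nat \<Rightarrow> nat \<Rightarrow> int" where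
  "ell n EH u v = (SOME d. \<exists>p. upath n EH u v p \<and> delta EH p = d)"

definition comp :: "nat \<Rightarrow> (nat \<times> nat) set \<Rightarrow> nat \<Rightarrow> nat set" where
  "comp n EH i = {j. \<exists>p. upath n EH i j p}"

definition weight_source :: "nat \<Rightarrow> (nat \<times> nat) set \<Rightarrow> nat set \<Rightarrow> nat \<Rightarrow> bool" where
  "weight_source n EH C s \<longleftrightarrow> s \<in> C \<and>
     (\<exists>t\<in>C. \<forall>u\<in>C. \<forall>v\<in>C. ell n EH u v \<le> ell n EH s t)"

definition weight :: "nat \<Rightarrow> (nat \<times> nat) set \<Rightarrow> nat \<Rightarrow> int" where
  "weight n EH i = ell n EH (SOME s. weight_source n EH (comp n EH i) s) i"

definition wd :: "nat \<Rightarrow> (nat \<times> nat) set \<Rightarrow> nat \<times> nat \<Rightarrow> int" where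
  "wd n EH e = weight n EH (fst e) - weight n EH (snd e)"

text \<open>A directed cycle of H_comp (loops included) is a nonempty list of edges of
  E(G) - E(H) whose consecutive (cyclically) edges are incident in H_comp, i.e.
  the head component of one is the tail component of the next, and whose tail
  components are pairwise distinct.\<close>

definition comp_cycle :: "nat \<Rightarrow> (nat \<times> nat) set \<Rightarrow> (nat \<times> nat) set \<Rightarrow> (nat \<times> nat) list \<Rightarrow> bool" where
  "comp_cycle n EG EH es \<longleftrightarrow> es \<noteq> [] \<and> set es \<subseteq> EG - EH \<and>
     distinct (map (\<lambda>e. comp n EH (fst e)) es) \<and>
     (\<forall>i < length es. comp n EH (snd (es!i)) = comp n EH (fst (es!((Suc i) mod length es))))"

definition admissible :: "nat \<Rightarrow> (nat \<times> nat) set \<Rightarrow> (nat \<times> nat) set \<Rightarrow> bool" where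
  "admissible n EG EH \<longleftrightarrow>
     (\<forall>es. comp_cycle n EG EH es \<longrightarrow> (\<Sum>e\<leftarrow>es. wd n EH e) > - int (length es))"

end

theory Submission
  imports Defs
begin

definition stp :: "(nat \<times> nat) set \<Rightarrow> nat \<Rightarrow> nat \<Rightarrow> int" where
  "stp EH a b = (if (a,b) \<in> EH then 1 else -1)"

lemma delta_snoc:
  assumes "p \<noteq> []"
  shows "delta EH (p @ [b]) = delta EH p + stp EH (last p) b"
proof -
  have L: "length (p @ [b]) - 1 = Suc (length p - 1)" using assms by simp
  have "delta EH (p @ [b]) = (\<Sum>i<length p - 1. if ((p@[b])!i, (p@[b])!Suc i) \<in> EH then 1 else -1)
      + (if ((p@[b])!(length p - 1), (p@[b])!Suc (length p - 1)) \<in> EH then 1 else -1)"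
    unfolding delta_def L by simp
  also have "(\<Sum>i<length p - 1. if ((p@[b])!i, (p@[b])!Suc i) \<in> EH then 1 else (-1::int))
      = (\<Sum>i<length p - 1. if (p!i, p!Suc i) \<in> EH then 1 else -1)"
    by (rule sum.cong) (auto simp: nth_append)
  also have "(p@[b])!(length p - 1) = last p" using assms by (simp add: nth_append last_conv_nth)
  also have "(p@[b])!Suc (length p - 1) = b" using assms by (simp add: nth_append)
  finally show ?thesis unfolding delta_def stp_def by simp
qed

lemma delta_single[simp]: "delta EH [a] = 0" by (simp add: delta_def)

lemma delta_append:
  "delta EH (a @ y # b) = delta EH (a @ [y]) + delta EH (y # b)"
proof (induction b rule: rev_induct)
  case Nil then show ?case by simp
next
  case (snoc x xs)
  have "delta EH (a @ y # xs @ [x]) = delta EH (a @ y # xs) + stp EH (last (a @ y # xs)) x"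
    using delta_snoc[of "a @ y # xs" EH x] by simp
  moreover have "delta EH (y # xs @ [x]) = delta EH (y # xs) + stp EH (last (y # xs)) x"
    using delta_snoc[of "y # xs" EH x] by simp
  moreover have "last (a @ y # xs) = last (y # xs)" by simp
  ultimately show ?case using snoc by simp
qed

lemma upath_prefix:
  assumes "upath n EH a b (p @ c # r)"
  shows "upath n EH a c (p @ [c])"
proof -
  have "\<forall>i. Suc i < length (p@[c]) \<longrightarrow> ((p@[c])!i, (p@[c])!Suc i) \<in> EH \<or> ((p@[c])!Suc i, (p@[c])!i) \<in> EH"
  proof (intro allI impI)
    fix i assume i: "Suc i < length (p@[c])"
    then have "Suc i < length (p @ c # r)" by simp
    then have "((p@c#r)!i, (p@c#r)!Suc i) \<in> EH \<or> ((p@c#r)!Suc i, (p@c#r)!i) \<in> EH"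
      using assms unfolding upath_def by blast
    moreover have "(p@c#r)!i = (p@[c])!i" using i by (simp add: nth_append)
    moreover have "(p@c#r)!Suc i = (p@[c])!Suc i" using i by (simp add: nth_append)
    ultimately show "((p@[c])!i, (p@[c])!Suc i) \<in> EH \<or> ((p@[c])!Suc i, (p@[c])!i) \<in> EH" by simp
  qed
  moreover have "hd (p @ [c]) = a" using assms unfolding upath_def by (cases p) auto
  ultimately show ?thesis using assms unfolding upath_def by auto
qed

lemma upath_suffix:
  assumes "upath n EH a b (p @ c # r)"
  shows "upath n EH c b (c # r)"
proof -
  have "\<forall>i. Suc i < length (c#r) \<longrightarrow> ((c#r)!i, (c#r)!Suc i) \<in> EH \<or> ((c#r)!Suc i, (c#r)!i) \<in> EH"
  proof (intro allI impI)
    fix i assume "Suc i < length (c#r)"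
    then have "Suc (length p + i) < length (p @ c # r)" by simp
    then have "((p@c#r)!(length p + i), (p@c#r)!Suc (length p + i)) \<in> EH \<or> ((p@c#r)!Suc (length p + i), (p@c#r)!(length p + i)) \<in> EH"
      using assms unfolding upath_def by blast
    moreover have "(p@c#r)!(length p + i) = (c#r)!i" by (simp add: nth_append)
    moreover have "(p@c#r)!Suc (length p + i) = (c#r)!Suc i"
      by (metis add_Suc_right nth_append_length_plus)
    ultimately show "((c#r)!i, (c#r)!Suc i) \<in> EH \<or> ((c#r)!Suc i, (c#r)!i) \<in> EH" by simp
  qed
  then show ?thesis using assms unfolding upath_def by auto
qed

lemma upath_snoc:
  assumes "upath n EH a z q" "y \<notin> set q" "y \<in> {1..n}" "(z,y) \<in> EH \<or> (y,z) \<in> EH"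
  shows "upath n EH a y (q @ [y])"
proof -
  have "\<forall>i. Suc i < length (q@[y]) \<longrightarrow> ((q@[y])!i, (q@[y])!Suc i) \<in> EH \<or> ((q@[y])!Suc i, (q@[y])!i) \<in> EH"
  proof (intro allI impI)
    fix i assume i: "Suc i < length (q@[y])"
    show "((q@[y])!i, (q@[y])!Suc i) \<in> EH \<or> ((q@[y])!Suc i, (q@[y])!i) \<in> EH"
    proof (cases "Suc i < length q")
      case True
      then show ?thesis using assms(1) unfolding upath_def by (simp add: nth_append)
    next
      case False
      then have "Suc i = length q" using i by simp
      moreover have "q \<noteq> []" "last q = z" using assms(1) unfolding upath_def by auto
      ultimately have ii: "i = length q - 1" "Suc i = length q" by auto
      have "(q@[y])!i = z" "(q@[y])!Suc i = y"
        using ii \<open>q \<noteq> []\<close> \<open>last q = z\<close> by (simp_all add: nth_append last_conv_nth)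
      then show ?thesis using assms(4) by simp
    qed
  qed
  moreover have "hd (q @ [y]) = a" using assms(1) unfolding upath_def by (cases q) auto
  ultimately show ?thesis using assms unfolding upath_def by auto
qed

lemma upath_rev:
  assumes "upath n EH a b p"
  shows "upath n EH b a (rev p)"
proof -
  have "\<forall>i. Suc i < length (rev p) \<longrightarrow> ((rev p)!i, (rev p)!Suc i) \<in> EH \<or> ((rev p)!Suc i, (rev p)!i) \<in> EH"
  proof (intro allI impI)
    fix i assume i: "Suc i < length (rev p)"
    define k where "k = length p - 2 - i"
    have k: "Suc k < length p" "Suc k = length p - 1 - i" using i unfolding k_def by auto
    have "(rev p)!i = p!Suc k" using i k by (simp add: rev_nth)
    moreover have "(rev p)!Suc i = p!k" using i k by (simp add: rev_nth k_def)
    ultimately show "((rev p)!i, (rev p)!Suc i) \<in> EH \<or> ((rev p)!Suc i, (rev p)!i) \<in> EH"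
      using assms k(1) unfolding upath_def by auto
  qed
  then show ?thesis using assms unfolding upath_def by (auto simp: hd_rev last_rev)
qed

definition wfh :: "nat \<Rightarrow> (nat \<times> nat) set \<Rightarrow> bool" where
  "wfh n EH \<longleftrightarrow> EH \<subseteq> {(i,j). 1 \<le> i \<and> i < j \<and> j \<le> n}"

lemma ell_eq:
  assumes "path_consistent n EH" "upath n EH s b q"
  shows "ell n EH s b = delta EH q"
proof -
  have "\<exists>d. \<exists>p. upath n EH s b p \<and> delta EH p = d" using assms(2) by blast
  then have "\<exists>p. upath n EH s b p \<and> delta EH p = ell n EH s b"
    unfolding ell_def by (rule someI_ex)
  then obtain p where "upath n EH s b p" "delta EH p = ell n EH s b" by blast
  then show ?thesis using assms unfolding path_consistent_def by metis
qed

lemma delta_two: "delta EH [y, z] = stp EH y z"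
  by (simp add: delta_def stp_def)

lemma upath_two:
  assumes "y \<noteq> z" "y \<in> {1..n}" "z \<in> {1..n}" "(y,z) \<in> EH \<or> (z,y) \<in> EH"
  shows "upath n EH y z [y, z]"
  using assms unfolding upath_def by (auto simp: less_Suc_eq)

lemma upath_set: "upath n EH a b p \<Longrightarrow> set p \<subseteq> {1..n}"
  unfolding upath_def by blast

lemma upath_last_in: "upath n EH a b p \<Longrightarrow> b \<in> set p"
  unfolding upath_def by auto

lemma ext_edge:
  assumes wf: "wfh n EH" and pc: "path_consistent n EH"
    and q: "upath n EH s z q" and adj: "(z,y) \<in> EH \<or> (y,z) \<in> EH"
  shows "\<exists>q'. upath n EH s y q' \<and> delta EH q' = delta EH q + stp EH z y"
proof -
  have yn: "y \<in> {1..n}" and zn: "z \<in> {1..n}" and yz: "y \<noteq> z"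
    using wf adj unfolding wfh_def by auto
  have asym: "\<not> ((z,y) \<in> EH \<and> (y,z) \<in> EH)"
  proof
    assume "(z,y) \<in> EH \<and> (y,z) \<in> EH"
    then have "z < y" "y < z" using wf unfolding wfh_def by auto
    then show False by simp
  qed
  show ?thesis
  proof (cases "y \<in> set q")
    case False
    have "upath n EH s y (q @ [y])" by (rule upath_snoc[OF q False yn adj])
    moreover have "delta EH (q @ [y]) = delta EH q + stp EH z y"
      using q delta_snoc[of q EH y] unfolding upath_def by auto
    ultimately show ?thesis by blast
  next
    case True
    then obtain q1 q2 where qs: "q = q1 @ y # q2" by (meson split_list)
    have 1: "upath n EH s y (q1 @ [y])" using upath_prefix q qs by metis
    have 2: "upath n EH y z (y # q2)" using upath_suffix q qs by metis
    have 3: "upath n EH y z [y, z]" using upath_two yz yn zn adj by blast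
    have "delta EH (y # q2) = delta EH [y, z]" using pc 2 3 unfolding path_consistent_def by blast
    also have "\<dots> = - stp EH z y" unfolding delta_two using asym adj by (auto simp: stp_def)
    finally have "delta EH q = delta EH (q1 @ [y]) - stp EH z y" using qs delta_append[of EH q1 y q2] by simp
    then show ?thesis using 1 by auto
  qed
qed

lemma upath_adj_last:
  assumes "upath n EH a b (xs @ [x])" "xs \<noteq> []"
  shows "(last xs, x) \<in> EH \<or> (x, last xs) \<in> EH"
proof -
  have "Suc (length xs - 1) < length (xs @ [x])" using assms(2) by simp
  then have "((xs@[x])!(length xs - 1), (xs@[x])!Suc (length xs - 1)) \<in> EH \<or>
             ((xs@[x])!Suc (length xs - 1), (xs@[x])!(length xs - 1)) \<in> EH"
    using assms(1) unfolding upath_def by blast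
  moreover have "(xs@[x])!(length xs - 1) = last xs" "(xs@[x])!Suc (length xs - 1) = x"
    using assms(2) by (auto simp: nth_append last_conv_nth)
  ultimately show ?thesis by simp
qed

lemma upath_butlast:
  assumes "upath n EH a b (xs @ [x])" "xs \<noteq> []"
  shows "upath n EH a (last xs) xs"
proof -
  have "xs @ [x] = butlast xs @ last xs # [x]" using assms(2) by simp
  then have "upath n EH a (last xs) (butlast xs @ [last xs])" using upath_prefix assms(1) by metis
  then show ?thesis using assms(2) by simp
qed

lemma concat_path:
  assumes wf: "wfh n EH" and pc: "path_consistent n EH" and q: "upath n EH s a q"
  shows "upath n EH a b p \<Longrightarrow> \<exists>q'. upath n EH s b q' \<and> delta EH q' = delta EH q + delta EH p"
proof (induction p arbitrary: b rule: rev_induct)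
  case Nil then show ?case by (simp add: upath_def)
next
  case (snoc x xs)
  show ?case
  proof (cases "xs = []")
    case True
    then have "x = a" "x = b" using snoc.prems unfolding upath_def by auto
    then show ?thesis using q True by auto
  next
    case False
    have bx: "b = x" using snoc.prems unfolding upath_def by auto
    from snoc.IH[OF upath_butlast[OF snoc.prems False]] obtain q'' where
      q'': "upath n EH s (last xs) q''" "delta EH q'' = delta EH q + delta EH xs" by blast
    obtain q' where "upath n EH s x q'" "delta EH q' = delta EH q'' + stp EH (last xs) x"
      using ext_edge[OF wf pc q''(1) upath_adj_last[OF snoc.prems False]] by blast
    moreover have "delta EH (xs @ [x]) = delta EH xs + stp EH (last xs) x"
      using delta_snoc False by blast
    ultimately show ?thesis using q''(2) bx by auto
  qed
qed

definition src :: "(nat \<times> nat) set \<Rightarrow> nat \<Rightarrow> bool" where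
  "src EH a \<longleftrightarrow> (\<exists>y. (a,y) \<in> EH)"

definition gp :: "(nat \<times> nat) set \<Rightarrow> nat \<Rightarrow> int" where
  "gp EH a = (if src EH a then 0 else 1)"

lemma tele:
  assumes no2: "\<And>u v x. (u,v) \<in> EH \<Longrightarrow> (v,x) \<in> EH \<Longrightarrow> False"
  shows "upath n EH a b p \<Longrightarrow> delta EH p = gp EH b - gp EH a"
proof (induction p arbitrary: b rule: rev_induct)
  case Nil then show ?case by (simp add: upath_def)
next
  case (snoc x xs)
  show ?case
  proof (cases "xs = []")
    case True
    then have "x = a" "x = b" using snoc.prems unfolding upath_def by auto
    then show ?thesis using True by auto
  next
    case False
    have bx: "b = x" using snoc.prems unfolding upath_def by auto
    have IH: "delta EH xs = gp EH (last xs) - gp EH a"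
      using snoc.IH[OF upath_butlast[OF snoc.prems False]] .
    have d: "delta EH (xs @ [x]) = delta EH xs + stp EH (last xs) x"
      using delta_snoc False by blast
    have "stp EH (last xs) x = gp EH x - gp EH (last xs)"
    proof (cases "(last xs, x) \<in> EH")
      case True
      then have "src EH (last xs)" "\<not> src EH x" using no2 unfolding src_def by blast+
      then show ?thesis using True unfolding stp_def gp_def by simp
    next
      case F: False
      then have E: "(x, last xs) \<in> EH" using upath_adj_last[OF snoc.prems False] by blast
      then have "src EH x" "\<not> src EH (last xs)" using no2 unfolding src_def by blast+
      then show ?thesis using F unfolding stp_def gp_def by simp
    qed
    then show ?thesis using IH d bx by simp
  qed
qed

lemma comp_self: "i \<in> {1..n} \<Longrightarrow> i \<in> comp n EH i"
  unfolding comp_def upath_def by auto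

lemma comp_sub: "comp n EH i \<subseteq> {1..n}"
  unfolding comp_def upath_def by auto

lemma comp_sym: "j \<in> comp n EH i \<Longrightarrow> i \<in> comp n EH j"
  unfolding comp_def using upath_rev by blast

lemma comp_trans:
  assumes "wfh n EH" "path_consistent n EH" "j \<in> comp n EH i" "k \<in> comp n EH j"
  shows "k \<in> comp n EH i"
  using assms concat_path unfolding comp_def by blast

lemma comp_eq:
  assumes "wfh n EH" "path_consistent n EH" "j \<in> comp n EH i"
  shows "comp n EH j = comp n EH i"
  using comp_trans[OF assms(1,2)] comp_sym assms(3) by blast

lemma ws_exists:
  assumes "i \<in> {1..n}"
  shows "\<exists>s. weight_source n EH (comp n EH i) s"
proof -
  let ?C = "comp n EH i"
  let ?f = "\<lambda>(u,v). ell n EH u v"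
  have fin: "finite (?f ` (?C \<times> ?C))" using comp_sub[of n EH i] finite_subset by blast
  have ne: "?f ` (?C \<times> ?C) \<noteq> {}" using comp_self[OF assms] by blast
  obtain s t where st: "(s,t) \<in> ?C \<times> ?C" "?f (s,t) = Max (?f ` (?C \<times> ?C))"
    using Max_in[OF fin ne] by auto
  have "\<forall>u\<in>?C. \<forall>v\<in>?C. ell n EH u v \<le> ell n EH s t"
  proof (intro ballI)
    fix u v assume "u \<in> ?C" "v \<in> ?C"
    then have "?f (u,v) \<le> Max (?f ` (?C \<times> ?C))" using fin by (intro Max_ge) auto
    then show "ell n EH u v \<le> ell n EH s t" using st(2) by simp
  qed
  then show ?thesis using st(1) unfolding weight_source_def by blast
qed

lemma weight_eq:
  assumes wf: "wfh n EH" and pc: "path_consistent n EH" and i: "i \<in> {1..n}"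
  obtains s q where "s \<in> comp n EH i" "upath n EH s i q" "weight n EH i = delta EH q"
    "\<And>j. j \<in> comp n EH i \<Longrightarrow> weight n EH j = ell n EH s j"
proof -
  define s where "s = (SOME s. weight_source n EH (comp n EH i) s)"
  have "weight_source n EH (comp n EH i) s"
    unfolding s_def using ws_exists[OF i] by (rule someI_ex)
  then have sC: "s \<in> comp n EH i" unfolding weight_source_def by blast
  then obtain p where "upath n EH i s p" unfolding comp_def by blast
  then have q: "upath n EH s i (rev p)" by (rule upath_rev)
  have W: "weight n EH j = ell n EH s j" if "j \<in> comp n EH i" for j
    using comp_eq[OF wf pc that] unfolding weight_def s_def by simp
  have "weight n EH i = delta EH (rev p)"
    using W[OF comp_self[OF i]] ell_eq[OF pc q] by simp
  then show ?thesis using that sC q W by blast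
qed

lemma loop_cycle:
  assumes "admissible n EG EH" "(u,x) \<in> EG" "(u,x) \<notin> EH" "comp n EH x = comp n EH u"
  shows "weight n EH u - weight n EH x > -1"
proof -
  have "comp_cycle n EG EH [(u,x)]" using assms(2-4) unfolding comp_cycle_def by auto
  then show ?thesis using assms(1) unfolding admissible_def wd_def by fastforce
qed

theorem mainTheorem15:
  fixes n :: nat and EG EH :: "(nat \<times> nat) set"
  assumes "dag_on n EG"
    and "trans_closed EG"
    and "EH \<subseteq> EG"
    and "path_consistent n EH"
    and "admissible n EG EH"
  shows "\<exists>\<P> L R. partition_on {1..n} \<P> \<and>
           (\<forall>P\<in>\<P>. L P \<subseteq> P \<and> R P \<subseteq> P \<and> L P \<inter> R P = {}) \<and>
           EH = (\<Union>P\<in>\<P>. {(i,j). (i,j) \<in> EG \<and> i \<in> P \<and> j \<in> P \<and> i \<in> L P \<and> j \<in> R P})"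
proof -
  have wf: "wfh n EH" using assms(1,3) unfolding wfh_def dag_on_def by blast
  have pc: "path_consistent n EH" by (rule assms(4))
  have inN: "a \<in> {1..n}" "b \<in> {1..n}" "a < b" if "(a,b) \<in> EH" for a b
    using wf that unfolding wfh_def by auto
  have no2: False if uv: "(u,v) \<in> EH" and vx: "(v,x) \<in> EH" for u v x
  proof -
    have ux: "(u,x) \<in> EG" using assms(2,3) uv vx unfolding trans_closed_def by blast
    have n3: "u \<in> {1..n}" "v \<in> {1..n}" "x \<in> {1..n}" "u < v" "v < x"
      using inN uv vx by auto
    have p3: "upath n EH u x [u,v,x]"
      using n3 uv vx unfolding upath_def by (auto simp: less_Suc_eq)
    have d3: "delta EH [u,v,x] = 2" using uv vx by (simp add: delta_def numeral_2_eq_2)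
    show False
    proof (cases "(u,x) \<in> EH")
      case True
      have "upath n EH u x [u,x]" using upath_two n3 True by simp
      moreover have "delta EH [u,x] = 1" using True by (simp add: delta_two stp_def)
      moreover have "delta EH [u,x] = delta EH [u,v,x]"
        using calculation(1) p3 pc unfolding path_consistent_def by blast
      ultimately show False using d3 by simp
    next
      case False
      have xC: "x \<in> comp n EH u" using p3 unfolding comp_def by blast
      have ceq: "comp n EH x = comp n EH u" by (rule comp_eq[OF wf pc xC])
      obtain s q where sq: "upath n EH s u q" "weight n EH u = delta EH q"
        "\<And>j. j \<in> comp n EH u \<Longrightarrow> weight n EH j = ell n EH s j"
        using weight_eq[OF wf pc n3(1)] by metis
      obtain q' where q': "upath n EH s x q'" "delta EH q' = delta EH q + 2"
        using concat_path[OF wf pc sq(1) p3] d3 by auto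
      have "weight n EH x = delta EH q + 2" using sq(3)[OF xC] ell_eq[OF pc q'(1)] q'(2) by simp
      then show False using loop_cycle[OF assms(5) ux False ceq] sq(2) by simp
    qed
  qed
  define C where "C = (\<lambda>i. comp n EH i)"
  define Pt where "Pt = C ` {1..n}"
  define L where "L = (\<lambda>P. {a\<in>P. src EH a})"
  define R where "R = (\<lambda>P. {a\<in>P. \<exists>y. (y,a) \<in> EH})"
  have part: "partition_on {1..n} Pt"
  proof (rule partition_onI)
    show "\<Union>Pt = {1..n}" unfolding Pt_def C_def using comp_self comp_sub by blast
    show "{} \<notin> Pt" unfolding Pt_def C_def using comp_self by blast
    fix p q assume "p \<in> Pt" "q \<in> Pt" "p \<noteq> q"
    then obtain i j where "p = comp n EH i" "q = comp n EH j" unfolding Pt_def C_def by blast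
    then show "disjnt p q" using comp_eq[OF wf pc] \<open>p \<noteq> q\<close> unfolding disjnt_def by blast
  qed
  have LR: "\<forall>P\<in>Pt. L P \<subseteq> P \<and> R P \<subseteq> P \<and> L P \<inter> R P = {}"
    unfolding L_def R_def src_def using no2 by blast
  have sub1: "EH \<subseteq> (\<Union>P\<in>Pt. {(i,j). (i,j) \<in> EG \<and> i \<in> P \<and> j \<in> P \<and> i \<in> L P \<and> j \<in> R P})"
  proof
    fix e assume e: "e \<in> EH"
    obtain i j where ij: "e = (i,j)" by (cases e)
    have "i \<in> {1..n}" "j \<in> {1..n}" "i < j" using inN e ij by auto
    then have "upath n EH i j [i,j]" using upath_two e ij by simp
    then have "j \<in> C i" "i \<in> C i" unfolding C_def comp_def using \<open>i \<in> {1..n}\<close> comp_self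
      unfolding comp_def by blast+
    moreover have "C i \<in> Pt" unfolding Pt_def using \<open>i \<in> {1..n}\<close> by blast
    ultimately show "e \<in> (\<Union>P\<in>Pt. {(i,j). (i,j) \<in> EG \<and> i \<in> P \<and> j \<in> P \<and> i \<in> L P \<and> j \<in> R P})"
      using e ij assms(3) unfolding L_def R_def src_def by blast
  qed
  have sub2: "(\<Union>P\<in>Pt. {(i,j). (i,j) \<in> EG \<and> i \<in> P \<and> j \<in> P \<and> i \<in> L P \<and> j \<in> R P}) \<subseteq> EH"
  proof
    fix e assume "e \<in> (\<Union>P\<in>Pt. {(i,j). (i,j) \<in> EG \<and> i \<in> P \<and> j \<in> P \<and> i \<in> L P \<and> j \<in> R P})"
    then obtain a i j where a: "a \<in> {1..n}" and ij: "e = (i,j)" "(i,j) \<in> EG" "i \<in> C a" "j \<in> C a"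
      "src EH i" "\<exists>y. (y,j) \<in> EH"
      unfolding Pt_def L_def R_def by blast
    show "e \<in> EH"
    proof (rule ccontr)
      assume ne: "e \<notin> EH"
      have ci: "C i = C a" using comp_eq[OF wf pc] ij(3) unfolding C_def by blast
      have cj: "C j = C a" using comp_eq[OF wf pc] ij(4) unfolding C_def by blast
      have jCi: "j \<in> comp n EH i" using ij(4) ci unfolding C_def by simp
      have iN: "i \<in> {1..n}" using ij(3) comp_sub unfolding C_def by blast
      obtain p where p: "upath n EH i j p" using jCi unfolding comp_def by blast
      have dp: "delta EH p = 1"
        using tele[OF no2 p] ij(5,6) no2 unfolding gp_def src_def by auto
      obtain s q where sq: "upath n EH s i q" "weight n EH i = delta EH q"
        "\<And>k. k \<in> comp n EH i \<Longrightarrow> weight n EH k = ell n EH s k"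
        using weight_eq[OF wf pc iN] by metis
      obtain q' where q': "upath n EH s j q'" "delta EH q' = delta EH q + 1"
        using concat_path[OF wf pc sq(1) p] dp by auto
      have "weight n EH j = delta EH q + 1" using sq(3)[OF jCi] ell_eq[OF pc q'(1)] q'(2) by simp
      moreover have "comp n EH j = comp n EH i" using ci cj unfolding C_def by simp
      ultimately show False using loop_cycle[OF assms(5) ij(2)] ne ij(1) sq(2) by simp
    qed
  qed
  show ?thesis using part LR sub1 sub2 by blast
qed

end
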